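(* Let $p$ be a prime, $k \geq 1$ an integer, $N = p^{2k+1}$, and let $d$ be odd. In the coefficient-choosing game of degree $d$ over $\mathbb{Z}/N\mathbb{Z}$, Wanda has a winning strategy (whether she moves first or second).
   Context: The coefficient-choosing game of degree $d$ over a finite ring $R = \mathbb{Z}/N\mathbb{Z}$: Nora and Wanda alternately choose coefficients of $f(x) = a_d x^d + \cdots + a_0$; on each move the current player picks a not-yet-chosen coefficient and assigns it a value in $R$, subject to $a_d \neq 0$, $a_0 \neq 0$. After all $d+1$ coefficients are chosen, Wanda wins if $f$ has a root in $R$, and Nora wins otherwise. *)

theory Defs
  imports "HOL-Computational_Algebra.Primes"
begin

text \<open>Residues are represented by
naturals in {0..<N}.  A position is a partial assignment of coefficients
(index i \<le> d maps to Some value, or None if not yet chosen).\<close>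

definition legal_move :: "nat \<Rightarrow> nat \<Rightarrow> nat \<Rightarrow> nat \<Rightarrow> bool" where
  "legal_move N d i v \<longleftrightarrow> v < N \<and> ((i = d \<or> i = 0) \<longrightarrow> v \<noteq> 0)"

definition has_root :: "nat \<Rightarrow> nat \<Rightarrow> (nat \<Rightarrow> nat option) \<Rightarrow> bool" where
  "has_root N d a \<longleftrightarrow> (\<exists>x<N. (\<Sum>i\<le>d. the (a i) * x ^ i) mod N = 0)"

fun wanda_wins :: "nat \<Rightarrow> nat \<Rightarrow> nat \<Rightarrow> (nat \<Rightarrow> nat option) \<Rightarrow> bool \<Rightarrow> bool" where
  "wanda_wins N d 0 a t = has_root N d a"
| "wanda_wins N d (Suc m) a t =
     (if t then (\<exists>i\<le>d. a i = None \<and> (\<exists>v. legal_move N d i v \<and> wanda_wins N d m (a(i := Some v)) False))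
      else (\<forall>i\<le>d. a i = None \<longrightarrow> (\<forall>v. legal_move N d i v \<longrightarrow> wanda_wins N d m (a(i := Some v)) True)))"

definition wanda_wins_game :: "nat \<Rightarrow> nat \<Rightarrow> bool \<Rightarrow> bool" where
  "wanda_wins_game N d wanda_first = wanda_wins N d (Suc d) (\<lambda>_. None) wanda_first"

end

theory Submission
  imports Defs "HOL-Number_Theory.Number_Theory"
begin

lemma root_from_any:
  assumes "(\<Sum>i\<le>d. the (b i) * x ^ i) mod N = 0" "N > 0"
  shows "has_root N d b"
proof -
  have e: "the (b i) * (x mod N)^i mod N = the (b i) * x^i mod N" for i
  proof -
    have "(x mod N)^i mod N = x^i mod N" by (rule power_mod)
    then show ?thesis by (metis mod_mult_right_eq)
  qed
  have "(\<Sum>i\<le>d. the (b i) * (x mod N) ^ i) mod N = (\<Sum>i\<le>d. the (b i) * (x mod N) ^ i mod N) mod N"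
    by (rule mod_sum_eq[symmetric])
  also have "\<dots> = (\<Sum>i\<le>d. the (b i) * x ^ i mod N) mod N"
    by (rule arg_cong[where f="\<lambda>s. s mod N"], rule sum.cong, rule refl, rule e)
  also have "\<dots> = (\<Sum>i\<le>d. the (b i) * x ^ i) mod N" by (rule mod_sum_eq)
  finally have r: "(\<Sum>i\<le>d. the (b i) * (x mod N) ^ i) mod N = 0" using assms(1) by simp
  have l: "x mod N < N" using assms(2) by simp
  show ?thesis unfolding has_root_def
    by (rule exI[of _ "x mod N"], rule conjI, rule l, rule r)
qed

lemma card_upd:
  assumes "a i = None" "i \<le> d"
  shows "card {j. j \<le> d \<and> (a(i := Some v)) j = None} = card {j. j \<le> d \<and> a j = None} - 1"
proof -
  have "{j. j \<le> d \<and> (a(i := Some v)) j = None} = {j. j \<le> d \<and> a j = None} - {i}" by auto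
  moreover have "i \<in> {j. j \<le> d \<and> a j = None}" using assms by auto
  ultimately show ?thesis by (simp add: card_Diff_singleton)
qed

lemma G:
  assumes "card {i. i \<le> d \<and> a i = None} = m" "N > 1"
    "\<forall>b. (\<forall>i\<le>d. b i \<noteq> None) \<longrightarrow> (\<forall>i\<le>d. a i \<noteq> None \<longrightarrow> b i = a i) \<longrightarrow> has_root N d b"
  shows "wanda_wins N d m a t"
  using assms
proof (induction m arbitrary: a t)
  case (0 a t)
  have "finite {i. i \<le> d \<and> a i = None}" by auto
  then have "\<forall>i\<le>d. a i \<noteq> None" using 0(1) by auto
  then show ?case using 0(3) by auto
next
  case (Suc m a t)
  have fin: "finite {i. i \<le> d \<and> a i = None}" by auto
  have IH: "wanda_wins N d m (a(i := Some v)) t'" if "i \<le> d" "a i = None" for i v t'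
  proof (rule Suc.IH)
    show "card {j. j \<le> d \<and> (a(i := Some v)) j = None} = m"
      using card_upd[of a i d v, OF that(2,1)] Suc.prems(1) by simp
    show "\<forall>b. (\<forall>i\<le>d. b i \<noteq> None) \<longrightarrow> (\<forall>j\<le>d. (a(i := Some v)) j \<noteq> None \<longrightarrow> b j = (a(i := Some v)) j) \<longrightarrow> has_root N d b"
    proof (intro allI impI)
      fix b assume b1: "\<forall>i\<le>d. b i \<noteq> None"
        and b2: "\<forall>j\<le>d. (a(i := Some v)) j \<noteq> None \<longrightarrow> b j = (a(i := Some v)) j"
      have "\<forall>j\<le>d. a j \<noteq> None \<longrightarrow> b j = a j"
      proof (intro allI impI)
        fix j assume "j \<le> d" "a j \<noteq> None"
        then have "j \<noteq> i" using that(2) by auto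
        then show "b j = a j" using b2 \<open>j \<le> d\<close> \<open>a j \<noteq> None\<close> by auto
      qed
      then show "has_root N d b" using Suc.prems(3) b1 by blast
    qed
    show "1 < N" using Suc.prems(2) .
  qed
  show ?case
  proof (cases t)
    case True
    obtain i where i: "i \<le> d" "a i = None"
    proof -
      have "{i. i \<le> d \<and> a i = None} \<noteq> {}" using Suc.prems(1) by (intro notI) simp
      then show ?thesis using that by blast
    qed
    have leg: "legal_move N d i 1" unfolding legal_move_def using Suc.prems(2) by auto
    have W: "wanda_wins N d m (a(i := Some 1)) False" using IH[OF i] by blast
    have "\<exists>i\<le>d. a i = None \<and> (\<exists>v. legal_move N d i v \<and> wanda_wins N d m (a(i := Some v)) False)"
      using i leg W by blast
    then show ?thesis unfolding wanda_wins.simps(2) using True by (simp only: if_True)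
  next
    case False
    have "\<forall>i\<le>d. a i = None \<longrightarrow> (\<forall>v. legal_move N d i v \<longrightarrow> wanda_wins N d m (a(i := Some v)) True)"
      using IH by blast
    then show ?thesis unfolding wanda_wins.simps(2) using False by (simp only: if_False)
  qed
qed

definition partner :: "nat \<Rightarrow> nat \<Rightarrow> nat" where
  "partner d i = (if i = 0 then d else if i = d then 0 else if odd i then i + 1 else i - 1)"

lemma partner_le: "odd d \<Longrightarrow> i \<le> d \<Longrightarrow> partner d i \<le> d"
  unfolding partner_def by (auto elim: oddE)

lemma partner_inv: "odd d \<Longrightarrow> i \<le> d \<Longrightarrow> partner d (partner d i) = i"
  unfolding partner_def by (auto elim: oddE)

lemma partner_neq: "odd d \<Longrightarrow> i \<le> d \<Longrightarrow> partner d i \<noteq> i"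
  unfolding partner_def by (auto elim: oddE)

lemma partner_ends: "odd d \<Longrightarrow> i \<le> d \<Longrightarrow> (partner d i = 0 \<or> partner d i = d) \<longleftrightarrow> (i = 0 \<or> i = d)"
  unfolding partner_def by (auto elim: oddE)

lemma partner_sign: "odd d \<Longrightarrow> i \<le> d \<Longrightarrow> (-1::int) ^ (partner d i) = - ((-1) ^ i)"
  unfolding partner_def by (auto elim: oddE)

lemma alt_sum_zero:
  fixes c :: "nat \<Rightarrow> nat"
  assumes d: "odd d" and bal: "\<forall>i\<le>d. c (partner d i) = c i"
  shows "(\<Sum>i\<le>d. (-1::int) ^ i * int (c i)) = 0"
proof -
  let ?g = "\<lambda>i. (-1::int) ^ i * int (c i)"
  have "(\<Sum>i\<le>d. ?g (partner d i)) = (\<Sum>i\<le>d. ?g i)"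
    by (rule sum.reindex_bij_witness[of _ "partner d" "partner d"])
       (auto simp: partner_inv[OF d] partner_le[OF d])
  moreover have "(\<Sum>i\<le>d. ?g (partner d i)) = - (\<Sum>i\<le>d. ?g i)"
  proof -
    have "(\<Sum>i\<le>d. ?g (partner d i)) = (\<Sum>i\<le>d. - ?g i)"
      by (rule sum.cong) (auto simp: partner_sign[OF d] bal)
    then show ?thesis by (simp add: sum_negf)
  qed
  ultimately show ?thesis by linarith
qed

lemma balanced_root:
  assumes d: "odd d" and N: "N > 0" and bal: "\<forall>i\<le>d. b (partner d i) = b i"
  shows "has_root N d b"
proof -
  let ?c = "\<lambda>i. the (b i)"
  have balc: "\<forall>i\<le>d. ?c (partner d i) = ?c i" using bal by simp
  have cm: "[int N - 1 = -1] (mod int N)" by (simp add: cong_iff_dvd_diff)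
  have "[(\<Sum>i\<le>d. int (?c i) * (int N - 1) ^ i) = (\<Sum>i\<le>d. int (?c i) * (-1) ^ i)] (mod int N)"
    by (rule cong_sum, rule cong_mult, rule cong_refl, rule cong_pow, rule cm)
  moreover have "(\<Sum>i\<le>d. int (?c i) * (-1) ^ i) = 0"
    using alt_sum_zero[OF d balc] by (simp add: mult.commute)
  moreover have "int (\<Sum>i\<le>d. ?c i * (N - 1) ^ i) = (\<Sum>i\<le>d. int (?c i) * (int N - 1) ^ i)"
    using N by (simp add: of_nat_diff)
  ultimately have "[int (\<Sum>i\<le>d. ?c i * (N - 1) ^ i) = 0] (mod int N)" by simp
  then have "(\<Sum>i\<le>d. ?c i * (N - 1) ^ i) mod N = 0"
    by (metis cong_0_iff dvd_eq_mod_eq_0 int_dvd_int_iff)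
  then show ?thesis by (rule root_from_any[OF _ N])
qed

lemma W2:
  assumes d: "odd d" and N: "N > 1"
  shows "card {i. i \<le> d \<and> a i = None} = m \<Longrightarrow> (\<forall>i\<le>d. a (partner d i) = a i) \<Longrightarrow> wanda_wins N d m a False"
proof (induction m arbitrary: a rule: less_induct)
  case (less m a)
  show ?case
  proof (cases m)
    case 0
    have "finite {i. i \<le> d \<and> a i = None}" by auto
    then have "\<forall>i\<le>d. a i \<noteq> None" using less.prems(1) 0 by auto
    have "has_root N d a" using balanced_root[OF d _ less.prems(2)] N by simp
    then show ?thesis using 0 by simp
  next
    case (Suc m1)
    have step: "wanda_wins N d m1 (a(i := Some v)) True" if i: "i \<le> d" "a i = None" and lg: "legal_move N d i v" for i v
    proof -
      let ?j = "partner d i"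
      have j: "?j \<le> d" "a ?j = None" "?j \<noteq> i"
        using partner_le[OF d i(1)] less.prems(2) i partner_neq[OF d i(1)] by auto
      let ?a1 = "a(i := Some v)"
      have c1: "card {k. k \<le> d \<and> ?a1 k = None} = m1"
        using card_upd[of a i d v, OF i(2,1)] less.prems(1) Suc by simp
      have a1j: "?a1 ?j = None" using j by simp
      have "card {k. k \<le> d \<and> ?a1 k = None} \<noteq> 0"
      proof -
        have "?j \<in> {k. k \<le> d \<and> ?a1 k = None}" using j a1j by simp
        then show ?thesis by (metis card_0_eq empty_iff finite_Collect_conjI finite_Collect_le_nat)
      qed
      then obtain m2 where m2: "m1 = Suc m2" using c1 by (cases m1) auto
      let ?a2 = "?a1(?j := Some v)"
      have c2: "card {k. k \<le> d \<and> ?a2 k = None} = m2"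
        using card_upd[of ?a1 ?j d v, OF a1j j(1)] c1 m2 by simp
      have bal2: "\<forall>k\<le>d. ?a2 (partner d k) = ?a2 k"
      proof (intro allI impI)
        fix k assume k: "k \<le> d"
        show "?a2 (partner d k) = ?a2 k"
        proof (cases "k = i \<or> k = ?j")
          case True
          then show ?thesis using partner_inv[OF d i(1)] by auto
        next
          case False
          have "partner d k \<noteq> i" "partner d k \<noteq> ?j"
            using False partner_inv[OF d k] partner_inv[OF d i(1)] by metis+
          then show ?thesis using False less.prems(2) k by simp
        qed
      qed
      have W: "wanda_wins N d m2 ?a2 False"
      proof (rule less.IH[of m2 ?a2, OF _ c2 bal2])
        show "m2 < m" using m2 Suc by simp
      qed
      have lg2: "legal_move N d ?j v"
        using lg partner_ends[OF d i(1)] unfolding legal_move_def by blast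
      have "\<exists>i'\<le>d. ?a1 i' = None \<and> (\<exists>v'. legal_move N d i' v' \<and> wanda_wins N d m2 (?a1(i' := Some v')) False)"
        using j(1) a1j lg2 W by blast
      then show ?thesis unfolding m2 wanda_wins.simps(2) by (simp only: if_True)
    qed
    have "\<forall>i\<le>d. a i = None \<longrightarrow> (\<forall>v. legal_move N d i v \<longrightarrow> wanda_wins N d m1 (a(i := Some v)) True)"
      using step by blast
    then show ?thesis unfolding Suc wanda_wins.simps(2) by (simp only: if_False)
  qed
qed

lemma sum_split2:
  fixes d :: nat
  assumes "1 \<le> d"
  shows "(\<Sum>i\<le>d. f i) = f 0 + f 1 + (\<Sum>i\<in>{2..d}. f i)"
proof -
  have "{..d} = insert 0 (insert 1 {2..d})" using assms by auto
  then show ?thesis by (simp add: add.assoc)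
qed

lemma sum_split3:
  fixes d :: nat
  assumes "2 \<le> d"
  shows "(\<Sum>i\<le>d. f i) = f 0 + f 1 + f 2 + (\<Sum>i\<in>{3..d}. f i)"
proof -
  have "{..d} = insert 0 (insert 1 (insert 2 {3..d}))" using assms by auto
  then show ?thesis by (simp add: add.assoc)
qed

lemma R2:
  fixes p k j u v d :: nat
  assumes p: "prime p" and k: "k \<ge> 1" and v: "v = p ^ j * u" and u: "\<not> p dvd u"
    and jk: "d = 1 \<or> j < k" and j2: "j \<le> 2 * k" and d: "d \<ge> 1"
    and b0: "the (b 0) = p ^ (2 * k)" and b1: "the (b 1) = v"
  shows "has_root (p ^ (2 * k + 1)) d b"
proof -
  have p1: "p > 1" using p prime_gt_1_nat by blast
  have "coprime u p" using prime_imp_coprime[OF p u] by (simp add: coprime_commute)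
  then obtain z where z: "[u * z = 1] (mod p)" using cong_solve_coprime_nat by auto
  define z' where "z' = (p - 1) * z"
  define x where "x = p ^ (2 * k - j) * z'"
  have "[1 + (p - 1) * (u * z) = 1 + (p - 1) * 1] (mod p)"
    by (intro cong_add cong_mult cong_refl z)
  moreover have "1 + (p - 1) * 1 = p" using p1 by simp
  ultimately have "[1 + u * z' = 0] (mod p)"
    unfolding z'_def by (metis cong_trans cong_mult_self_right mult.left_commute mult_1 cong_0_iff dvd_refl)
  then have hp: "p dvd 1 + u * z'" by (simp add: cong_0_iff)
  have head: "the (b 0) * x ^ 0 + the (b 1) * x ^ 1 = p ^ (2 * k) * (1 + u * z')"
  proof -
    have "p ^ j * p ^ (2 * k - j) = p ^ (2 * k)" using j2 by (simp add: power_add[symmetric])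
    then have "v * x = p ^ (2 * k) * (u * z')" unfolding v x_def
      by (metis mult.assoc mult.commute)
    then show ?thesis using b0 b1 by (simp add: algebra_simps)
  qed
  have e: "p ^ (2 * k + 1) = p ^ (2 * k) * p" by simp
  have hdvd: "p ^ (2 * k + 1) dvd p ^ (2 * k) * (1 + u * z')"
    unfolding e by (rule mult_dvd_mono[OF dvd_refl hp])
  have tail: "p ^ (2 * k + 1) dvd (\<Sum>i\<in>{2..d}. the (b i) * x ^ i)"
  proof (rule dvd_sum)
    fix i assume i: "i \<in> {2..d}"
    then have "d \<noteq> 1" by auto
    then have jk': "j < k" using jk by simp
    have "2 * k + 1 \<le> (2 * k - j) * i"
    proof -
      have "2 * k + 1 \<le> (2 * k - j) * 2" using jk' by simp
      also have "\<dots> \<le> (2 * k - j) * i" using i by simp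
      finally show ?thesis .
    qed
    then have "p ^ (2 * k + 1) dvd p ^ ((2 * k - j) * i)" by (rule le_imp_power_dvd)
    also have "p ^ ((2 * k - j) * i) dvd x ^ i" unfolding x_def
      by (simp add: power_mult_distrib power_mult)
    finally show "p ^ (2 * k + 1) dvd the (b i) * x ^ i" by simp
  qed
  have "(\<Sum>i\<le>d. the (b i) * x ^ i) = p ^ (2 * k) * (1 + u * z') + (\<Sum>i\<in>{2..d}. the (b i) * x ^ i)"
    using sum_split2[OF d, of "\<lambda>i. the (b i) * x ^ i"] head by simp
  then have "p ^ (2 * k + 1) dvd (\<Sum>i\<le>d. the (b i) * x ^ i)"
    using hdvd tail by simp
  then have "(\<Sum>i\<le>d. the (b i) * x ^ i) mod p ^ (2 * k + 1) = 0" by simp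
  then show ?thesis by (rule root_from_any) (use p1 in simp)
qed

lemma R3:
  fixes p k w c d :: nat
  assumes p: "prime p" and k: "k \<ge> 1" and d: "d \<ge> 2"
    and b0: "the (b 0) = p ^ (2 * k)" and b1: "the (b 1) = p ^ k * w" and b2: "the (b 2) = c"
    and hc: "p dvd 1 + w + c"
  shows "has_root (p ^ (2 * k + 1)) d b"
proof -
  have p1: "p > 1" using p prime_gt_1_nat by blast
  define x where "x = p ^ k"
  have head: "the (b 0) * x ^ 0 + the (b 1) * x ^ 1 + the (b 2) * x ^ 2 = p ^ (2 * k) * (1 + w + c)"
  proof -
    have xx: "p ^ k * p ^ k = p ^ (2 * k)" by (simp add: power_add[symmetric] mult_2)
    have "x ^ 2 = p ^ (2 * k)" unfolding x_def using xx by (simp add: power2_eq_square)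
    moreover have "the (b 1) * x ^ 1 = w * p ^ (2 * k)" unfolding b1 x_def using xx
      by (metis mult.assoc mult.commute power_one_right)
    ultimately show ?thesis using b0 b2 by (simp add: algebra_simps)
  qed
  have e: "p ^ (2 * k + 1) = p ^ (2 * k) * p" by simp
  have hdvd: "p ^ (2 * k + 1) dvd p ^ (2 * k) * (1 + w + c)"
    unfolding e by (rule mult_dvd_mono[OF dvd_refl hc])
  have tail: "p ^ (2 * k + 1) dvd (\<Sum>i\<in>{3..d}. the (b i) * x ^ i)"
  proof (rule dvd_sum)
    fix i assume i: "i \<in> {3..d}"
    have "2 * k + 1 \<le> k * i"
    proof -
      have "2 * k + 1 \<le> k * 3" using k by simp
      also have "\<dots> \<le> k * i" using i by simp
      finally show ?thesis .
    qed
    then have "p ^ (2 * k + 1) dvd p ^ (k * i)" by (rule le_imp_power_dvd)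
    also have "p ^ (k * i) = x ^ i" unfolding x_def by (simp add: power_mult)
    finally show "p ^ (2 * k + 1) dvd the (b i) * x ^ i" by simp
  qed
  have "(\<Sum>i\<le>d. the (b i) * x ^ i) = p ^ (2 * k) * (1 + w + c) + (\<Sum>i\<in>{3..d}. the (b i) * x ^ i)"
    using sum_split3[OF d, of "\<lambda>i. the (b i) * x ^ i"] head by simp
  then have "p ^ (2 * k + 1) dvd (\<Sum>i\<le>d. the (b i) * x ^ i)"
    using hdvd tail by simp
  then have "(\<Sum>i\<le>d. the (b i) * x ^ i) mod p ^ (2 * k + 1) = 0" by simp
  then show ?thesis by (rule root_from_any) (use p1 in simp)
qed

lemma decomp:
  fixes p v :: nat
  assumes "prime p" "v \<noteq> 0"
  obtains j u where "v = p ^ j * u" "\<not> p dvd u"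
proof -
  have "p \<noteq> 1" using assms(1) by auto
  then obtain y where "v = p ^ multiplicity p v * y" "\<not> p dvd y"
    using multiplicity_decompose'[of v p] assms by auto
  then show thesis using that by blast
qed

lemma wanda_first:
  fixes p k d :: nat
  assumes p: "prime p" and k: "k \<ge> 1" and d: "odd d"
  shows "wanda_wins (p ^ (2 * k + 1)) d (Suc d) (\<lambda>_. None) True"
proof -
  define N where "N = p ^ (2 * k + 1)"
  define P where "P = p ^ (2 * k)"
  have p1: "p > 1" using p prime_gt_1_nat by blast
  have NP: "N = P * p" unfolding N_def P_def by simp
  have P0: "P > 0" unfolding P_def using p1 by simp
  have PN: "P < N" unfolding NP using P0 p1 by simp
  have N1: "N > 1" using PN P0 by linarith
  define init :: "nat \<Rightarrow> nat option" where "init = (\<lambda>_. None)(0 := Some P)"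
  have cinit: "card {i. i \<le> d \<and> init i = None} = d"
  proof -
    have "{i. i \<le> d \<and> init i = None} = {1..d}" unfolding init_def by auto
    then show ?thesis by simp
  qed
  obtain d1 where d1: "d = Suc d1" using d by (cases d) auto
  have main: "wanda_wins N d d1 (init(i := Some v)) True"
    if i: "i \<le> d" "init i = None" and lg: "legal_move N d i v" for i v
  proof -
    let ?a2 = "init(i := Some v)"
    have i0: "i \<noteq> 0" using i unfolding init_def by (auto split: if_splits)
    have vN: "v < N" using lg unfolding legal_move_def by simp
    have c2: "card {j. j \<le> d \<and> ?a2 j = None} = d1"
      using card_upd[of init i d v, OF i(2,1)] cinit d1 by simp
    have b0: "the (b 0) = P" if "\<forall>j\<le>d. ?a2 j \<noteq> None \<longrightarrow> b j = ?a2 j" for b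
      using that i0 unfolding init_def by auto
    show ?thesis
    proof (cases "d = 1")
      case True
      then have i1: "i = 1" "d1 = 0" using i i0 d1 by auto
      have v0: "v \<noteq> 0" using lg True i1 unfolding legal_move_def by simp
      obtain j u where ju: "v = p ^ j * u" "\<not> p dvd u" using decomp[OF p v0] by blast
      have u0: "u > 0" using ju v0 by (cases u) auto
      have "p ^ j \<le> v" using ju u0 by simp
      then have "p ^ j < p ^ (2 * k + 1)" using vN unfolding N_def by simp
      then have "j < 2 * k + 1" by (rule power_less_imp_less_exp[OF p1])
      then have j2: "j \<le> 2 * k" by simp
      show ?thesis
      proof (rule G[OF _ N1])
        show "card {j. j \<le> d \<and> ?a2 j = None} = d1" by (rule c2)
        show "\<forall>b. (\<forall>i\<le>d. b i \<noteq> None) \<longrightarrow> (\<forall>j\<le>d. ?a2 j \<noteq> None \<longrightarrow> b j = ?a2 j) \<longrightarrow> has_root N d b"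
        proof (intro allI impI)
          fix b assume "\<forall>i\<le>d. b i \<noteq> None" and ag: "\<forall>j\<le>d. ?a2 j \<noteq> None \<longrightarrow> b j = ?a2 j"
          have "the (b 1) = v" using ag i1 True by auto
          then show "has_root N d b" unfolding N_def
            using R2[OF p k ju _ j2, of d b] True b0[OF ag] unfolding P_def by simp
        qed
      qed
    next
      case False
      then have d3: "d \<ge> 3" using d by (cases d rule: parity_cases) (auto elim!: oddE)
      obtain d2 where d2: "d1 = Suc d2" using d3 d1 by (cases d1) auto
      have good: "wanda_wins N d d1 ?a2 True"
        if i': "i' \<le> d" "?a2 i' = None" and lg': "legal_move N d i' v'"
          and rt: "\<And>b. (\<forall>j\<le>d. ?a2 j \<noteq> None \<longrightarrow> b j = ?a2 j) \<Longrightarrow> the (b i') = v' \<Longrightarrow> has_root N d b"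
        for i' v'
      proof -
        have W: "wanda_wins N d d2 (?a2(i' := Some v')) False"
        proof (rule G[OF _ N1])
          show "card {j. j \<le> d \<and> (?a2(i' := Some v')) j = None} = d2"
            using card_upd[of ?a2 i' d v', OF i'(2,1)] c2 d2 by simp
          show "\<forall>b. (\<forall>i\<le>d. b i \<noteq> None) \<longrightarrow> (\<forall>j\<le>d. (?a2(i' := Some v')) j \<noteq> None \<longrightarrow> b j = (?a2(i' := Some v')) j) \<longrightarrow> has_root N d b"
          proof (intro allI impI)
            fix b assume "\<forall>i\<le>d. b i \<noteq> None" and ag: "\<forall>j\<le>d. (?a2(i' := Some v')) j \<noteq> None \<longrightarrow> b j = (?a2(i' := Some v')) j"
            have ag2: "\<forall>j\<le>d. ?a2 j \<noteq> None \<longrightarrow> b j = ?a2 j"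
            proof (intro allI impI)
              fix j assume "j \<le> d" "?a2 j \<noteq> None"
              then have "j \<noteq> i'" using i'(2) by auto
              then show "b j = ?a2 j" using ag \<open>j \<le> d\<close> \<open>?a2 j \<noteq> None\<close> by auto
            qed
            have "the (b i') = v'" using ag i'(1) by auto
            then show "has_root N d b" using rt[OF ag2] by simp
          qed
        qed
        have "\<exists>i'\<le>d. ?a2 i' = None \<and> (\<exists>v'. legal_move N d i' v' \<and> wanda_wins N d d2 (?a2(i' := Some v')) False)"
          using i' lg' W by blast
        then show ?thesis unfolding d2 wanda_wins.simps(2) by (simp only: if_True)
      qed
      show ?thesis
      proof (cases "i = 1")
        case True
        have a22: "?a2 2 = None" using True unfolding init_def by simp
        have b1: "the (b 1) = v" if "\<forall>j\<le>d. ?a2 j \<noteq> None \<longrightarrow> b j = ?a2 j" for b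
          using that True d3 by auto
        show ?thesis
        proof (cases "p ^ k dvd v")
          case True
          then obtain w where w: "v = p ^ k * w" by blast
          define c where "c = p - 1 - w mod p"
          have cp: "c < p" unfolding c_def using p1 by simp
          have "p \<le> P * p" using P0 by simp
          then have cN: "c < N" using cp NP by linarith
          have lgc: "legal_move N d 2 c" unfolding legal_move_def using cN d3 by auto
          have hc: "p dvd 1 + w + c"
          proof -
            have "w mod p < p" using p1 by simp
            then have "1 + w + c = p + p * (w div p)" unfolding c_def
              using mult_div_mod_eq[of p w] p1 by arith
            then show ?thesis by simp
          qed
          show ?thesis
          proof (rule good[OF _ a22 lgc])
            show "2 \<le> d" using d3 by simp
            fix b assume ag: "\<forall>j\<le>d. ?a2 j \<noteq> None \<longrightarrow> b j = ?a2 j" and "the (b 2) = c"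
            then show "has_root N d b" unfolding N_def
              using R3[OF p k _ _ _ _ hc, of d b] d3 b0[OF ag] b1[OF ag] w unfolding P_def by simp
          qed
        next
          case False
          have v0: "v \<noteq> 0" using False by (metis dvd_0_right)
          obtain j u where ju: "v = p ^ j * u" "\<not> p dvd u" using decomp[OF p v0] by blast
          have jk: "j < k"
          proof (rule ccontr)
            assume "\<not> j < k"
            then have "p ^ k dvd p ^ j" by (simp add: le_imp_power_dvd)
            then show False using False ju by (metis dvd_mult2)
          qed
          have lg0: "legal_move N d 2 0" unfolding legal_move_def using PN d3 by auto
          show ?thesis
          proof (rule good[OF _ a22 lg0])
            show "2 \<le> d" using d3 by simp
            fix b assume ag: "\<forall>j\<le>d. ?a2 j \<noteq> None \<longrightarrow> b j = ?a2 j"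
            then show "has_root N d b" unfolding N_def
              using R2[OF p k ju _ _ _ b0[OF ag, unfolded P_def] b1[OF ag]] jk d3 by simp
          qed
        qed
      next
        case False
        have a21: "?a2 1 = None" using False unfolding init_def by simp
        have lg1: "legal_move N d 1 1" unfolding legal_move_def using N1 by auto
        show ?thesis
        proof (rule good[OF _ a21 lg1])
          show "1 \<le> d" using d3 by simp
          fix b assume ag: "\<forall>j\<le>d. ?a2 j \<noteq> None \<longrightarrow> b j = ?a2 j" and b1: "the (b 1) = 1"
          have ju: "1 = p ^ 0 * 1" "\<not> p dvd 1" using p1 by auto
          show "has_root N d b" unfolding N_def
            using R2[OF p k ju _ _ _ b0[OF ag, unfolded P_def] b1] k d3 by simp
        qed
      qed
    qed
  qed
  have W1: "wanda_wins N d d init False"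
    unfolding d1 wanda_wins.simps(2) if_False
  proof (intro allI impI)
    fix i v assume "i \<le> Suc d1" "init i = None" "legal_move N (Suc d1) i v"
    then show "wanda_wins N (Suc d1) d1 (init(i := Some v)) True" using main d1 by simp
  qed
  have lgP: "legal_move N d 0 P" unfolding legal_move_def using PN P0 by simp
  have "\<exists>i\<le>d. (\<lambda>_. None) i = (None :: nat option) \<and> (\<exists>v. legal_move N d i v \<and> wanda_wins N d d ((\<lambda>_. None)(i := Some v)) False)"
    using lgP W1 unfolding init_def by blast
  then show ?thesis unfolding N_def[symmetric] wanda_wins.simps(2) by (simp only: if_True)
qed

theorem lemma6:
  fixes p k d :: nat
  assumes "prime p" and "k \<ge> 1" and "odd d"
  shows "wanda_wins_game (p ^ (2 * k + 1)) d True \<and> wanda_wins_game (p ^ (2 * k + 1)) d False"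
proof
  show "wanda_wins_game (p ^ (2 * k + 1)) d True"
    unfolding wanda_wins_game_def by (rule wanda_first[OF assms])
  have p1: "p > 1" using assms(1) prime_gt_1_nat by blast
  have N1: "p ^ (2 * k + 1) > 1" by (rule one_less_power[OF p1]) simp
  have c: "card {i. i \<le> d \<and> (\<lambda>_. None :: nat option) i = None} = Suc d" by simp
  show "wanda_wins_game (p ^ (2 * k + 1)) d False"
    unfolding wanda_wins_game_def by (rule W2[OF assms(3) N1 c]) simp
qed

end
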